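(* Let $F$ be a non-archimedean local field of characteristic not $2$ with valuation ring $\mathfrak{o}$ and maximal ideal $\mathfrak{p}$, let $\lambda\in\mathfrak{o}$ with $ord_\mathfrak{p}(\lambda)\in\{0,1\}$, and let $H=Mat(2,F)$ with the involution $$\begin{pmatrix} a & b\\ c& d\end{pmatrix}^{\ddagger_\lambda}=\begin{pmatrix} a & c/\lambda\\ b\lambda & d\end{pmatrix}.$$ Suppose $\Lambda$ is a lattice in $F^2$ which has an orthogonal basis with respect to $b$. Then there exists $g\in GO(Mat(2,F),\ddagger_\lambda)$ such that $$End(\Lambda)\cap End(\Lambda^\sharp)\subset g\bigl(Mat(2,\mathfrak{o})\cap Mat(2,\mathfrak{o})^{\ddagger_\lambda}\bigr)g^{-1}.$$
   Context: Here $b$ is the symmetric bilinear form on $F^2$ given by $b((x_1,y_1),(x_2,y_2))=\lambda x_1x_2+y_1y_2$, whose adjoint involution is $\ddagger_\lambda$ (i.e. $b(v,\sigma w)=b(\sigma^{\ddagger_\lambda}v,w)$). A lattice is a finitely generated $\mathfrak{o}$-submodule spanning $F^2$; $\Lambda^\sharp=\{v: b(v,\Lambda)\subset\mathfrak{o}\}$; $End(\Lambda)=\{\sigma\in Mat(2,F):\sigma\Lambda\subset\Lambda\}$; $X^{\ddagger_\lambda}=\{x^{\ddagger_\lambda}:x\in X\}$. $GO(Mat(2,F),\ddagger_\lambda)=\{x\in GL(2,F): x^{\ddagger_\lambda}x\in F\}$. *)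

theory Defs
  imports "HOL-Analysis.Analysis"
begin

text \<open>A normalized discrete valuation on a field, given by its values on nonzero elements
  (the value at 0 is irrelevant and conventionally infinity).\<close>
definition discrete_valuation :: "('a::field \<Rightarrow> int) \<Rightarrow> bool" where
  "discrete_valuation v \<longleftrightarrow>
     (\<forall>x y. x \<noteq> 0 \<and> y \<noteq> 0 \<longrightarrow> v (x * y) = v x + v y) \<and>
     (\<forall>x y. x \<noteq> 0 \<and> y \<noteq> 0 \<and> x + y \<noteq> 0 \<longrightarrow> min (v x) (v y) \<le> v (x + y)) \<and>
     (\<exists>x. x \<noteq> 0 \<and> v x = 1)"

definition val_ring :: "('a::field \<Rightarrow> int) \<Rightarrow> 'a set" where
  "val_ring v = {x. x = 0 \<or> 0 \<le> v x}"

definition max_ideal :: "('a::field \<Rightarrow> int) \<Rightarrow> 'a set" where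
  "max_ideal v = {x. x = 0 \<or> 0 < v x}"

definition val_complete :: "('a::field \<Rightarrow> int) \<Rightarrow> bool" where
  "val_complete v \<longleftrightarrow>
     (\<forall>s :: nat \<Rightarrow> 'a.
        (\<forall>N::int. \<exists>M. \<forall>m\<ge>M. \<forall>n\<ge>M. s m - s n = 0 \<or> N \<le> v (s m - s n)) \<longrightarrow>
        (\<exists>L. \<forall>N::int. \<exists>M. \<forall>n\<ge>M. s n - L = 0 \<or> N \<le> v (s n - L)))"

definition nonarch_local_field :: "('a::field \<Rightarrow> int) \<Rightarrow> bool" where
  "nonarch_local_field v \<longleftrightarrow>
     discrete_valuation v \<and> val_complete v \<and>
     finite ((\<lambda>x. {y \<in> val_ring v. x - y \<in> max_ideal v}) ` val_ring v)"

definition bform :: "'a::field \<Rightarrow> 'a^2 \<Rightarrow> 'a^2 \<Rightarrow> 'a" where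
  "bform lam u w = lam * (u$1) * (w$1) + (u$2) * (w$2)"

definition invol :: "'a::field \<Rightarrow> 'a^2^2 \<Rightarrow> 'a^2^2" where
  "invol lam A = (\<chi> i j. if i = 1 \<and> j = 1 then A$1$1
                        else if i = 1 \<and> j = 2 then A$2$1 / lam
                        else if i = 2 \<and> j = 1 then A$1$2 * lam
                        else A$2$2)"

definition is_lattice :: "('a::field \<Rightarrow> int) \<Rightarrow> ('a^2) set \<Rightarrow> bool" where
  "is_lattice v L \<longleftrightarrow>
     (\<exists>S. finite S \<and> S \<subseteq> L \<and>
        L = {w. \<exists>c. (\<forall>s\<in>S. c s \<in> val_ring v) \<and> w = (\<Sum>s\<in>S. c s *s s)}) \<and>
     (\<forall>w. \<exists>S c. finite S \<and> S \<subseteq> L \<and> w = (\<Sum>s\<in>S. c s *s s))"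

definition has_orth_basis :: "('a::field \<Rightarrow> int) \<Rightarrow> 'a \<Rightarrow> ('a^2) set \<Rightarrow> bool" where
  "has_orth_basis v lam L \<longleftrightarrow>
     (\<exists>e1 e2. bform lam e1 e2 = 0 \<and>
        (\<forall>a c. a \<in> val_ring v \<and> c \<in> val_ring v \<and> a *s e1 + c *s e2 = 0 \<longrightarrow> a = 0 \<and> c = 0) \<and>
        L = {a *s e1 + c *s e2 | a c. a \<in> val_ring v \<and> c \<in> val_ring v})"

definition dual_lattice :: "('a::field \<Rightarrow> int) \<Rightarrow> 'a \<Rightarrow> ('a^2) set \<Rightarrow> ('a^2) set" where
  "dual_lattice v lam L = {w. \<forall>u\<in>L. bform lam w u \<in> val_ring v}"

definition End_lat :: "('a^2) set \<Rightarrow> ('a::field^2^2) set" where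
  "End_lat L = {\<sigma>. \<forall>u\<in>L. \<sigma> *v u \<in> L}"

definition Mat_o :: "('a::field \<Rightarrow> int) \<Rightarrow> ('a^2^2) set" where
  "Mat_o v = {A. \<forall>i j. A$i$j \<in> val_ring v}"

definition GO :: "'a::field \<Rightarrow> ('a^2^2) set" where
  "GO lam = {x. invertible x \<and> (\<exists>c. invol lam x ** x = mat c)}"

end

theory Submission imports Defs begin

lemma vmult: "discrete_valuation v \<Longrightarrow> x \<noteq> 0 \<Longrightarrow> y \<noteq> 0 \<Longrightarrow> v (x*y) = v x + v y"
  unfolding discrete_valuation_def by blast

lemma vdiv: assumes "discrete_valuation v" "x \<noteq> 0" "y \<noteq> 0" shows "v (x/y) = v x - v y"
proof -
  have "v x = v ((x/y)*y)" using assms by simp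
  also have "\<dots> = v (x/y) + v y" using vmult[OF assms(1), of "x/y" y] assms by simp
  finally show ?thesis by simp
qed

lemma v1: "discrete_valuation v \<Longrightarrow> v 1 = 0"
  using vmult[of v 1 1] by simp

lemma key:
  fixes v :: "'a::field \<Rightarrow> int"
  assumes dv: "discrete_valuation v" and l: "lam \<noteq> 0" "v lam \<in> {0,1}"
    and nz: "a1 \<noteq> 0" "a2 \<noteq> 0" "d \<noteq> 0" and rel: "a1*a2 = lam*d^2"
    and b: "b \<in> val_ring v" and c: "c \<in> val_ring v"
    and c2: "c*a2/a1 \<in> val_ring v" and b2: "b*a1/a2 \<in> val_ring v"
  shows "b/(a2/d) \<in> val_ring v" "(a2/d)*c \<in> val_ring v" "(a2/d)*c/lam \<in> val_ring v"
    "b/(a2/d)*lam \<in> val_ring v"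
proof -
  have e: "v a1 + v a2 = v lam + 2 * v d"
  proof -
    have "v (a1*a2) = v (lam*(d*d))" using rel by (simp add: power2_eq_square)
    thus ?thesis using vmult[OF dv] nz l by (simp add: vmult[OF dv])
  qed
  have vs: "v (a2/d) = v a2 - v d" using vdiv[OF dv] nz by simp
  have sn: "a2/d \<noteq> 0" using nz by simp
  show "b/(a2/d) \<in> val_ring v" "b/(a2/d)*lam \<in> val_ring v"
  proof -
    have "(b/(a2/d) \<in> val_ring v) \<and> (b/(a2/d)*lam \<in> val_ring v)"
    proof (cases "b = 0")
      case True thus ?thesis by (simp add: val_ring_def)
    next
      case False
      have h1: "0 \<le> v b" using b False by (simp add: val_ring_def)
      have h2: "0 \<le> v b + v a1 - v a2" using b2 False nz vdiv[OF dv, of "b*a1" a2] vmult[OF dv, of b a1]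
        by (simp add: val_ring_def)
      have q1: "v (b/(a2/d)) = v b - (v a2 - v d)" using vdiv[OF dv False sn] vs by simp
      have q2: "v (b/(a2/d)*lam) = v b - (v a2 - v d) + v lam"
        using vmult[OF dv, of "b/(a2/d)" lam] q1 False sn l by simp
      have "0 \<le> v b - (v a2 - v d)" using h1 h2 e l(2) by (cases "v lam = 0"; simp; presburger)
      thus ?thesis using q1 q2 l(2) by (auto simp: val_ring_def)
    qed
    thus "b/(a2/d) \<in> val_ring v" "b/(a2/d)*lam \<in> val_ring v" by auto
  qed
  show "(a2/d)*c \<in> val_ring v" "(a2/d)*c/lam \<in> val_ring v"
  proof -
    have "((a2/d)*c \<in> val_ring v) \<and> ((a2/d)*c/lam \<in> val_ring v)"
    proof (cases "c = 0")
      case True thus ?thesis by (simp add: val_ring_def)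
    next
      case False
      have h1: "0 \<le> v c" using c False by (simp add: val_ring_def)
      have h2: "0 \<le> v c + v a2 - v a1" using c2 False nz vdiv[OF dv, of "c*a2" a1] vmult[OF dv, of c a2]
        by (simp add: val_ring_def)
      have q1: "v ((a2/d)*c) = v a2 - v d + v c" using vmult[OF dv sn False] vs by simp
      have q2: "v ((a2/d)*c/lam) = v a2 - v d + v c - v lam"
        using vdiv[OF dv, of "(a2/d)*c" lam] q1 False sn l by simp
      have "v lam \<le> v a2 - v d + v c" using h1 h2 e l(2) by (cases "v lam = 0"; simp; presburger)
      thus ?thesis using q1 q2 l(2) by (auto simp: val_ring_def)
    qed
    thus "(a2/d)*c \<in> val_ring v" "(a2/d)*c/lam \<in> val_ring v" by auto
  qed
qed

lemma scale_o:
  fixes v :: "'a::field \<Rightarrow> int"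
  assumes dv: "discrete_valuation v" and ne: "\<alpha> \<noteq> 0 \<or> \<beta> \<noteq> 0"
  shows "\<exists>\<gamma>. \<gamma> \<noteq> 0 \<and> \<gamma>*\<alpha> \<in> val_ring v \<and> \<gamma>*\<beta> \<in> val_ring v"
proof (cases "\<alpha> = 0 \<or> \<beta> = 0")
  case True
  show ?thesis
  proof (cases "\<alpha> = 0")
    case True
    hence "\<beta> \<noteq> 0" using ne by simp
    thus ?thesis using True by (intro exI[of _ "inverse \<beta>"]) (simp add: val_ring_def v1[OF dv])
  next
    case False
    hence "\<beta> = 0" using \<open>\<alpha> = 0 \<or> \<beta> = 0\<close> by simp
    thus ?thesis using False by (intro exI[of _ "inverse \<alpha>"]) (simp add: val_ring_def v1[OF dv])
  qed
next
  case False
  show ?thesis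
  proof (cases "v \<alpha> \<le> v \<beta>")
    case True
    have "v (\<beta>/\<alpha>) = v \<beta> - v \<alpha>" using vdiv[OF dv] False by simp
    hence "inverse \<alpha> * \<beta> \<in> val_ring v" using True by (simp add: val_ring_def field_simps)
    thus ?thesis using False by (intro exI[of _ "inverse \<alpha>"]) (simp add: val_ring_def v1[OF dv])
  next
    case F2: False
    have "v (\<alpha>/\<beta>) = v \<alpha> - v \<beta>" using vdiv[OF dv] False by simp
    hence "inverse \<beta> * \<alpha> \<in> val_ring v" using F2 by (simp add: val_ring_def field_simps)
    thus ?thesis using False by (intro exI[of _ "inverse \<beta>"]) (simp add: val_ring_def v1[OF dv])
  qed
qed

lemma indep_det:
  fixes v :: "'a::field \<Rightarrow> int" and e1 e2 :: "'a^2"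
  assumes dv: "discrete_valuation v"
    and ind: "\<forall>a c. a \<in> val_ring v \<and> c \<in> val_ring v \<and> a *s e1 + c *s e2 = 0 \<longrightarrow> a = 0 \<and> c = 0"
  shows "e1$1 * e2$2 - e2$1 * e1$2 \<noteq> 0"
proof
  assume d0: "e1$1 * e2$2 - e2$1 * e1$2 = 0"
  have "\<exists>\<alpha> \<beta>. (\<alpha> \<noteq> 0 \<or> \<beta> \<noteq> 0) \<and> \<alpha> *s e1 + \<beta> *s e2 = 0"
  proof (cases "e1$2 \<noteq> 0 \<or> e2$2 \<noteq> 0")
    case True thus ?thesis using d0
      by (intro exI[of _ "e2$2"] exI[of _ "- e1$2"]) (auto simp: vec_eq_iff forall_2 algebra_simps)
  next
    case False
    show ?thesis
    proof (cases "e1$1 \<noteq> 0 \<or> e2$1 \<noteq> 0")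
      case True thus ?thesis using False
        by (intro exI[of _ "e2$1"] exI[of _ "- e1$1"]) (auto simp: vec_eq_iff forall_2 algebra_simps)
    next
      case F2: False
      thus ?thesis using False
        by (intro exI[of _ 1] exI[of _ 0]) (auto simp: vec_eq_iff forall_2)
    qed
  qed
  then obtain \<alpha> \<beta> where ab: "\<alpha> \<noteq> 0 \<or> \<beta> \<noteq> 0" "\<alpha> *s e1 + \<beta> *s e2 = 0" by blast
  obtain \<gamma> where g: "\<gamma> \<noteq> 0" "\<gamma>*\<alpha> \<in> val_ring v" "\<gamma>*\<beta> \<in> val_ring v"
    using scale_o[OF dv ab(1)] by blast
  have "(\<gamma>*\<alpha>) *s e1 + (\<gamma>*\<beta>) *s e2 = 0"
  proof -
    have "(\<gamma>*\<alpha>) *s e1 + (\<gamma>*\<beta>) *s e2 = \<gamma> *s (\<alpha> *s e1 + \<beta> *s e2)"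
      by (simp add: vec_eq_iff algebra_simps)
    thus ?thesis using ab(2) by simp
  qed
  hence "\<gamma>*\<alpha> = 0 \<and> \<gamma>*\<beta> = 0" using ind g by blast
  thus False using g(1) ab(1) by simp
qed


lemma bf_lin: "bform lam (k *s (a *s e1 + c *s e2)) w = k * (a * bform lam e1 w + c * bform lam e2 w)"
  by (simp add: bform_def algebra_simps)

lemma bf_lin2: "bform lam w (a *s e1 + c *s e2) = a * bform lam w e1 + c * bform lam w e2"
  by (simp add: bform_def algebra_simps)

lemma bf_scale: "bform lam (k *s u) w = k * bform lam u w"
  by (simp add: bform_def algebra_simps)

lemma bf_lin1: "bform lam (a *s e1 + c *s e2) w = a * bform lam e1 w + c * bform lam e2 w"
  by (simp add: bform_def algebra_simps)

lemma bf_sym: "bform lam u w = bform lam w u"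
  by (simp add: bform_def algebra_simps)

theorem lemma5p5:
  fixes v :: "'a::field \<Rightarrow> int" and lam :: 'a and L :: "('a^2) set"
  assumes "nonarch_local_field v"
    and "(2::'a) \<noteq> 0"
    and "lam \<in> val_ring v" and "lam \<noteq> 0" and "v lam \<in> {0, 1}"
    and "is_lattice v L"
    and "has_orth_basis v lam L"
  shows "\<exists>g \<in> GO lam.
           End_lat L \<inter> End_lat (dual_lattice v lam L)
             \<subseteq> (\<lambda>A. g ** A ** matrix_inv g) ` (Mat_o v \<inter> invol lam ` Mat_o v)"
proof -
  have dv: "discrete_valuation v" using assms(1) by (simp add: nonarch_local_field_def)
  have l0: "lam \<noteq> 0" and lv: "v lam \<in> {0,1}" using assms by auto
  obtain e1 e2 :: "'a^2" where orth0: "bform lam e1 e2 = 0"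
    and ind: "\<forall>a c. a \<in> val_ring v \<and> c \<in> val_ring v \<and> a *s e1 + c *s e2 = 0 \<longrightarrow> a = 0 \<and> c = 0"
    and Ld: "L = {a *s e1 + c *s e2 | a c. a \<in> val_ring v \<and> c \<in> val_ring v}"
    using assms(7) unfolding has_orth_basis_def by (elim exE conjE) (rule that; assumption)
  define x1 where "x1 = e1$1"
  define y1 where "y1 = e1$2"
  define x2 where "x2 = e2$1"
  define y2 where "y2 = e2$2"
  have orth: "lam*x1*x2 + y1*y2 = 0" using orth0 by (simp add: bform_def x1_def x2_def y1_def y2_def)
  define d where "d = x1*y2 - x2*y1"
  have d0: "d \<noteq> 0" using indep_det[OF dv ind] by (simp add: d_def x1_def x2_def y1_def y2_def)
  define a1 where "a1 = lam*x1*x1 + y1*y1"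
  define a2 where "a2 = lam*x2*x2 + y2*y2"
  have "a1*a2 = lam*d^2 + (lam*x1*x2 + y1*y2)^2"
    by (simp add: a1_def a2_def d_def power2_eq_square algebra_simps)
  hence rel: "a1*a2 = lam*d^2" using orth by simp
  have a10: "a1 \<noteq> 0" and a20: "a2 \<noteq> 0" using rel l0 d0 by auto
  define sc where "sc = a2/d"
  have sc0: "sc \<noteq> 0" using a20 d0 by (simp add: sc_def)
  have ssa: "sc * sc * a1 = lam*a2"
  proof -
    have "sc * sc * a1 = a2*(a1*a2)/(d*d)" by (simp add: sc_def field_simps)
    also have "\<dots> = lam*a2" using rel d0 by (simp add: power2_eq_square field_simps)
    finally show ?thesis .
  qed
  define g :: "'a^2^2" where "g = (\<chi> i j. if i=1 then (if j=1 then sc * x1 else x2) else (if j=1 then sc * y1 else y2))"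
  define h :: "'a^2^2" where "h = (\<chi> i j. (if i=1 then (if j=1 then y2 else -x2) else (if j=1 then - sc * y1 else sc * x1)) / (sc * d))"
  have gh: "g ** h = mat 1"
  proof -
    have "sc * x1 * y2 + x2 * (- sc * y1) = sc * d" by (simp add: d_def algebra_simps)
    hence "(sc * x1 * y2 + x2 * (- sc * y1)) / (sc * d) = 1" using sc0 d0 by simp
    moreover have "(sc * y1 * y2 + y2 * (- sc * y1)) / (sc * d) = 0" by (simp add: algebra_simps)
    moreover have "(sc * x1 * (- x2) + x2 * (sc * x1)) / (sc * d) = 0" by (simp add: algebra_simps)
    moreover have "sc * y1 * (- x2) + y2 * (sc * x1) = sc * d" by (simp add: d_def algebra_simps)
    hence "(sc * y1 * (- x2) + y2 * (sc * x1)) / (sc * d) = 1" using sc0 d0 by simp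
    moreover have "x1 * y2 / d - x2 * y1 / d = 1" "y2 * x1 / d - y1 * x2 / d = 1"
      using d0 by (simp_all add: diff_divide_distrib[symmetric] d_def mult.commute)
    ultimately show ?thesis
      by (simp add: g_def h_def matrix_matrix_mult_def sum_2 vec_eq_iff forall_2 mat_def add_divide_distrib)
  qed
  have hg: "h ** g = mat 1" using gh matrix_left_right_inverse by blast
  have invg: "invertible g" using gh hg unfolding invertible_def by blast
  have minv: "matrix_inv g = h"
  proof -
    have "g ** matrix_inv g = mat 1 \<and> matrix_inv g ** g = mat 1"
      unfolding matrix_inv_def by (rule someI[of _ h]) (use gh hg in blast)
    hence "matrix_inv g ** g = mat 1" by blast
    hence "(matrix_inv g ** g) ** h = h" by (simp add: matrix_mul_lid)
    thus ?thesis by (metis matrix_mul_assoc gh matrix_mul_rid)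
  qed
  have gGO: "g \<in> GO lam"
  proof -
    have "invol lam g ** g = mat a2"
    proof -
      have e11: "sc * x1 * (sc * x1) + sc * y1 / lam * (sc * y1) = a2"
      proof -
        have "sc * x1 * (sc * x1) + sc * y1 / lam * (sc * y1) = (sc * sc * a1) / lam"
          using l0 by (simp add: a1_def field_simps)
        thus ?thesis using ssa l0 by simp
      qed
      have e12: "sc * x1 * x2 + sc * y1 / lam * y2 = 0"
      proof -
        have "sc * x1 * x2 + sc * y1 / lam * y2 = sc * (lam*x1*x2 + y1*y2) / lam"
          using l0 by (simp add: field_simps)
        thus ?thesis using orth by simp
      qed
      have e21: "x2 * lam * (sc * x1) + y2 * (sc * y1) = 0"
      proof -
        have "x2 * lam * (sc * x1) + y2 * (sc * y1) = sc * (lam*x1*x2 + y1*y2)"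
          by (simp add: algebra_simps)
        thus ?thesis using orth by simp
      qed
      have e22: "x2 * lam * x2 + y2 * y2 = a2" by (simp add: a2_def algebra_simps)
      show ?thesis using e11 e12 e21 e22
        by (simp add: g_def invol_def matrix_matrix_mult_def sum_2 vec_eq_iff forall_2 mat_def)
    qed
    thus ?thesis using invg unfolding GO_def by blast
  qed
  have o0: "0 \<in> val_ring v" "1 \<in> val_ring v" by (simp_all add: val_ring_def v1[OF dv])
  have e1L: "e1 \<in> L"
  proof -
    have "e1 = 1 *s e1 + 0 *s e2" by (simp add: vec_eq_iff)
    thus ?thesis unfolding Ld using o0 by blast
  qed
  have e2L: "e2 \<in> L"
  proof -
    have "e2 = 0 *s e1 + 1 *s e2" by (simp add: vec_eq_iff)
    thus ?thesis unfolding Ld using o0 by blast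
  qed
  have b11: "bform lam e1 e1 = a1" by (simp add: bform_def a1_def x1_def y1_def)
  have b22: "bform lam e2 e2 = a2" by (simp add: bform_def a2_def x2_def y2_def)
  have b21: "bform lam e2 e1 = 0" using orth0 bf_sym by metis
  have f1D: "(1/a1) *s (1 *s e1 + 0 *s e2) \<in> dual_lattice v lam L"
    unfolding dual_lattice_def
  proof (rule CollectI, rule ballI)
    fix u assume "u \<in> L"
    then obtain a' c' where u: "a' \<in> val_ring v" "u = a' *s e1 + c' *s e2" unfolding Ld by blast
    show "bform lam ((1/a1) *s (1 *s e1 + 0 *s e2)) u \<in> val_ring v"
      using u a10 by (simp add: bf_scale bf_lin1 bf_lin2 b11 orth0)
  qed
  have f2D: "(1/a2) *s (0 *s e1 + 1 *s e2) \<in> dual_lattice v lam L"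
    unfolding dual_lattice_def
  proof (rule CollectI, rule ballI)
    fix u assume "u \<in> L"
    then obtain a' c' where u: "c' \<in> val_ring v" "u = a' *s e1 + c' *s e2" unfolding Ld by blast
    show "bform lam ((1/a2) *s (0 *s e1 + 1 *s e2)) u \<in> val_ring v"
      using u a20 by (simp add: bf_scale bf_lin1 bf_lin2 b22 b21)
  qed
  show ?thesis
  proof (rule bexI[OF _ gGO], rule subsetI)
    fix \<sigma> assume "\<sigma> \<in> End_lat L \<inter> End_lat (dual_lattice v lam L)"
    hence sL: "\<forall>u\<in>L. \<sigma> *v u \<in> L" and sD: "\<forall>u\<in>dual_lattice v lam L. \<sigma> *v u \<in> dual_lattice v lam L"
      by (auto simp: End_lat_def)
    have "\<sigma> *v e1 \<in> L" using sL e1L by blast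
    then obtain a c where ac: "a \<in> val_ring v" "c \<in> val_ring v" "\<sigma> *v e1 = a *s e1 + c *s e2"
      unfolding Ld by blast
    have "\<sigma> *v e2 \<in> L" using sL e2L by blast
    then obtain b t where bt: "b \<in> val_ring v" "t \<in> val_ring v" "\<sigma> *v e2 = b *s e1 + t *s e2"
      unfolding Ld by blast
    have "\<sigma> *v ((1/a1) *s (1 *s e1 + 0 *s e2)) \<in> dual_lattice v lam L" using sD f1D by blast
    hence "bform lam (\<sigma> *v ((1/a1) *s (1 *s e1 + 0 *s e2))) e2 \<in> val_ring v"
      using e2L unfolding dual_lattice_def by blast
    hence cc: "c * a2 / a1 \<in> val_ring v"
      using ac(3) by (simp add: vector_scalar_commute bf_scale bf_lin1 orth0 b22)
    have "\<sigma> *v ((1/a2) *s (0 *s e1 + 1 *s e2)) \<in> dual_lattice v lam L" using sD f2D by blast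
    hence "bform lam (\<sigma> *v ((1/a2) *s (0 *s e1 + 1 *s e2))) e1 \<in> val_ring v"
      using e1L unfolding dual_lattice_def by blast
    hence bb: "b * a1 / a2 \<in> val_ring v"
      using bt(3) by (simp add: vector_scalar_commute bf_scale bf_lin1 b21 b11)
    have sd: "sc = a2/d" by (rule sc_def)
    note K = key[OF dv l0 lv a10 a20 d0 rel bt(1) ac(2) cc bb, folded sd]
    define A where "A = h ** (\<sigma> ** g)"
    have u1: "(\<sigma> *v e1)$1 = a * x1 + c * x2" "(\<sigma> *v e1)$2 = a * y1 + c * y2"
      using ac(3) by (simp_all add: x1_def x2_def y1_def y2_def)
    have u2: "(\<sigma> *v e2)$1 = b * x1 + t * x2" "(\<sigma> *v e2)$2 = b * y1 + t * y2"
      using bt(3) by (simp_all add: x1_def x2_def y1_def y2_def)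
    have sg1: "(\<sigma> ** g)$k$1 = sc * (\<sigma> *v e1)$k" for k
      by (simp add: g_def matrix_matrix_mult_def matrix_vector_mult_def sum_2 x1_def y1_def algebra_simps)
    have sg2: "(\<sigma> ** g)$k$2 = (\<sigma> *v e2)$k" for k
      by (simp add: g_def matrix_matrix_mult_def matrix_vector_mult_def sum_2 x2_def y2_def)
    have Ae: "A$i$j = h$i$1 * (\<sigma> ** g)$1$j + h$i$2 * (\<sigma> ** g)$2$j" for i j
      by (simp add: A_def matrix_matrix_mult_def sum_2)
    have h11: "h$1$1 = y2/(sc*d)" and h12: "h$1$2 = -x2/(sc*d)"
      and h21: "h$2$1 = -sc*y1/(sc*d)" and h22: "h$2$2 = sc*x1/(sc*d)"
      by (simp_all add: h_def)
    have sdn: "sc * d \<noteq> 0" using sc0 d0 by simp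
    have A11: "A$1$1 = a"
    proof -
      have "A$1$1 = y2/(sc*d) * (sc * (a * x1 + c * x2)) + -x2/(sc*d) * (sc * (a * y1 + c * y2))"
        unfolding Ae h11 h12 sg1 u1 ..
      also have "\<dots> = (y2 * (sc * (a * x1 + c * x2)) + (-x2) * (sc * (a * y1 + c * y2))) / (sc * d)"
        using sdn by (simp add: field_simps)
      also have "y2 * (sc * (a * x1 + c * x2)) + (-x2) * (sc * (a * y1 + c * y2)) = a * (sc * d)"
        by (simp add: d_def algebra_simps)
      finally show ?thesis using sdn sc0 d0 by simp
    qed
    have A21: "A$2$1 = sc * c"
    proof -
      have "A$2$1 = -sc*y1/(sc*d) * (sc * (a * x1 + c * x2)) + sc*x1/(sc*d) * (sc * (a * y1 + c * y2))"
        unfolding Ae h21 h22 sg1 u1 ..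
      also have "\<dots> = ((-sc*y1) * (sc * (a * x1 + c * x2)) + (sc*x1) * (sc * (a * y1 + c * y2))) / (sc * d)"
        using sdn by (simp add: field_simps)
      also have "(-sc*y1) * (sc * (a * x1 + c * x2)) + (sc*x1) * (sc * (a * y1 + c * y2)) = (sc * c) * (sc * d)"
        by (simp add: d_def algebra_simps)
      finally show ?thesis using sdn sc0 d0 by simp
    qed
    have A12: "A$1$2 = b / sc"
    proof -
      have "A$1$2 = y2/(sc*d) * (b * x1 + t * x2) + -x2/(sc*d) * (b * y1 + t * y2)"
        unfolding Ae h11 h12 sg2 u2 ..
      also have "\<dots> = (y2 * (b * x1 + t * x2) + (-x2) * (b * y1 + t * y2)) / (sc * d)"
        using sdn by (simp add: field_simps)
      also have "y2 * (b * x1 + t * x2) + (-x2) * (b * y1 + t * y2) = b * d"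
        by (simp add: d_def algebra_simps)
      finally show ?thesis using sdn sc0 d0 by simp
    qed
    have A22: "A$2$2 = t"
    proof -
      have "A$2$2 = -sc*y1/(sc*d) * (b * x1 + t * x2) + sc*x1/(sc*d) * (b * y1 + t * y2)"
        unfolding Ae h21 h22 sg2 u2 ..
      also have "\<dots> = ((-sc*y1) * (b * x1 + t * x2) + (sc*x1) * (b * y1 + t * y2)) / (sc * d)"
        using sdn by (simp add: field_simps)
      also have "(-sc*y1) * (b * x1 + t * x2) + (sc*x1) * (b * y1 + t * y2) = t * (sc * d)"
        by (simp add: d_def algebra_simps)
      finally show ?thesis using sdn sc0 d0 by simp
    qed
    have AM: "A \<in> Mat_o v"
      unfolding Mat_o_def using A11 A12 A21 A22 ac bt K by (auto simp: forall_2)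
    have IM: "invol lam A \<in> Mat_o v"
      unfolding Mat_o_def using A11 A12 A21 A22 ac bt K by (auto simp: forall_2 invol_def)
    have II: "invol lam (invol lam A) = A"
      using l0 by (simp add: invol_def vec_eq_iff forall_2)
    have AI: "A \<in> invol lam ` Mat_o v" using II IM by (metis image_eqI)
    have "g ** A ** h = \<sigma>"
      unfolding A_def by (metis matrix_mul_assoc matrix_mul_lid matrix_mul_rid gh)
    thus "\<sigma> \<in> (\<lambda>A. g ** A ** matrix_inv g) ` (Mat_o v \<inter> invol lam ` Mat_o v)"
      using AM AI minv by (metis (no_types, lifting) IntI image_eqI)
  qed
qed

end
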